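(* Let $\theta,\theta_1,\dots,\theta_k\in(0,\pi)$. Then $\sum_{i=1}^k\theta_i<\theta$ if and only if $\sin\big(\theta-\sum_{i\in I}\theta_i\big)>0$ for every subset $I\subseteq\{1,\dots,k\}$ (including $I=\emptyset$). *)

theory Defs
  imports Complex_Main
begin

end

theory Submission
  imports Defs
begin

theorem lemma2p1:
  fixes \<theta> :: real and th :: "nat \<Rightarrow> real" and k :: nat
  assumes "0 < \<theta>" and "\<theta> < pi"
    and "\<And>i. i \<in> {1..k} \<Longrightarrow> 0 < th i \<and> th i < pi"
  shows "(\<Sum>i=1..k. th i) < \<theta> \<longleftrightarrow>
         (\<forall>I. I \<subseteq> {1..k} \<longrightarrow> sin (\<theta> - (\<Sum>i\<in>I. th i)) > 0)"
proof
  assume S: "(\<Sum>i=1..k. th i) < \<theta>"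
  show "\<forall>I. I \<subseteq> {1..k} \<longrightarrow> sin (\<theta> - (\<Sum>i\<in>I. th i)) > 0"
  proof (intro allI impI)
    fix I assume I: "I \<subseteq> {1..k}"
    have pos: "\<And>i. i \<in> {1..k} \<Longrightarrow> 0 \<le> th i" using assms(3) less_imp_le by blast
    have nn: "0 \<le> (\<Sum>i\<in>I. th i)"
      using I pos by (intro sum_nonneg) blast
    have "(\<Sum>i\<in>I. th i) \<le> (\<Sum>i=1..k. th i)"
      using I pos by (intro sum_mono2) auto
    then show "sin (\<theta> - (\<Sum>i\<in>I. th i)) > 0"
      using S nn assms(2) by (intro sin_gt_zero) auto
  qed
next
  assume H: "\<forall>I. I \<subseteq> {1..k} \<longrightarrow> sin (\<theta> - (\<Sum>i\<in>I. th i)) > 0"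
  have "j \<le> k \<Longrightarrow> (\<Sum>i=1..j. th i) < \<theta>" for j
  proof (induction j)
    case 0
    then show ?case using assms(1) by simp
  next
    case (Suc j)
    have IH: "(\<Sum>i=1..j. th i) < \<theta>" using Suc by simp
    have t: "0 < th (Suc j) \<and> th (Suc j) < pi" using Suc.prems assms(3) by auto
    have eq: "(\<Sum>i=1..Suc j. th i) = (\<Sum>i=1..j. th i) + th (Suc j)" by simp
    have s: "sin (\<theta> - (\<Sum>i=1..Suc j. th i)) > 0"
    proof -
      have "{1..Suc j} \<subseteq> {1..k}" using Suc.prems by auto
      then show ?thesis using H by blast
    qed
    show ?case
    proof (rule ccontr)
      assume "\<not> ?case"
      then have a: "0 \<le> (\<Sum>i=1..Suc j. th i) - \<theta>"
        and b: "(\<Sum>i=1..Suc j. th i) - \<theta> \<le> pi" using eq IH t by auto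
      have "0 \<le> sin ((\<Sum>i=1..Suc j. th i) - \<theta>)" by (rule sin_ge_zero[OF a b])
      moreover have "sin ((\<Sum>i=1..Suc j. th i) - \<theta>) = - sin (\<theta> - (\<Sum>i=1..Suc j. th i))"
        by (metis minus_diff_eq sin_minus)
      ultimately show False using s by linarith
    qed
  qed
  then show "(\<Sum>i=1..k. th i) < \<theta>" by simp
qed

end
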